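(* Let $k\ge2$ be even, $\alpha_1,\dots,\alpha_k$ positive integers, and $G=C(\alpha_1,\dots,\alpha_k)$. Then the clique number of $G$ is $$\omega(G)=\max_{1\le i\le k/2}\Big\{\alpha_{2i-1}+\Big(\frac{k}{2}-i+1\Big)\Big\}.$$
   Context: $C(\alpha_1,\dots,\alpha_k)$ is defined recursively by $C(\alpha_1)=\overline{K_{\alpha_1}}$ (edgeless graph) and $C(\alpha_1,\dots,\alpha_i)=\overline{C(\alpha_1,\dots,\alpha_{i-1})\cup K_{\alpha_i}}$ for $i=2,\dots,k$ (disjoint union, then complement). Equivalently for $k$ even, with $\pi_i$ the $\alpha_i$ vertices introduced at step $i$: $\pi_i$ is a clique for $i$ odd, independent for $i$ even, and for $i<j$ vertices of $\pi_i,\pi_j$ are adjacent iff $j$ is even. $\omega(G)$ is the maximum size of a clique in $G$. *)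

theory Defs
  imports Main
begin

text \<open>Vertices of C(alpha_1,...,alpha_m): pairs (i,j) with 1 <= i <= m, j < alpha i;
  the block pi_i consists of the alpha_i vertices (i,_) introduced at step i.\<close>
definition cverts :: "(nat \<Rightarrow> nat) \<Rightarrow> nat \<Rightarrow> (nat \<times> nat) set" where
  "cverts \<alpha> m = {(i, j). 1 \<le> i \<and> i \<le> m \<and> j < \<alpha> i}"

text \<open>Adjacency of C(alpha_1,...,alpha_m), following the recursive definition:
  C(alpha_1) is edgeless; C(alpha_1..alpha_i) is the complement of the disjoint union
  of C(alpha_1..alpha_(i-1)) with the clique on pi_i. (Meaningful on cverts.)\<close>
fun cadj :: "(nat \<Rightarrow> nat) \<Rightarrow> nat \<Rightarrow> nat \<times> nat \<Rightarrow> nat \<times> nat \<Rightarrow> bool" where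
  "cadj \<alpha> 0 u v = False"
| "cadj \<alpha> (Suc 0) u v = False"
| "cadj \<alpha> (Suc (Suc n)) u v =
     (u \<noteq> v \<and> \<not> (if fst u \<le> Suc n \<and> fst v \<le> Suc n then cadj \<alpha> (Suc n) u v
                 else if fst u = Suc (Suc n) \<and> fst v = Suc (Suc n) then True
                 else False))"

definition is_clique :: "'a set \<Rightarrow> ('a \<Rightarrow> 'a \<Rightarrow> bool) \<Rightarrow> 'a set \<Rightarrow> bool" where
  "is_clique V E S \<longleftrightarrow> S \<subseteq> V \<and> (\<forall>u\<in>S. \<forall>v\<in>S. u \<noteq> v \<longrightarrow> E u v)"

definition clique_number :: "'a set \<Rightarrow> ('a \<Rightarrow> 'a \<Rightarrow> bool) \<Rightarrow> nat" where
  "clique_number V E = Max {card S | S. is_clique V E S}"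

end

theory Submission imports Defs begin

lemma cadj_closed:
  "1 \<le> fst u \<Longrightarrow> 1 \<le> fst v \<Longrightarrow> fst u \<le> Suc n \<Longrightarrow> fst v \<le> Suc n \<Longrightarrow>
   cadj \<alpha> (Suc n) u v = (u \<noteq> v \<and> (if fst u = fst v then odd (Suc n - fst u) else even (Suc n - max (fst u) (fst v))))"
proof (induction n arbitrary: u v)
  case 0
  then have "fst u = 1" "fst v = 1" by auto
  then show ?case by simp
next
  case (Suc n)
  show ?case
  proof (cases "fst u \<le> Suc n \<and> fst v \<le> Suc n")
    case True
    with Suc.IH[of u v] Suc.prems show ?thesis by (auto simp: max_def)
  next
    case False
    then have "fst u = Suc (Suc n) \<or> fst v = Suc (Suc n)" using Suc.prems by auto
    then show ?thesis
    proof
      assume h: "fst u = Suc (Suc n)"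
      show ?thesis using h False Suc.prems by (cases "fst v = Suc (Suc n)") (auto simp: max_def)
    next
      assume h: "fst v = Suc (Suc n)"
      show ?thesis using h False Suc.prems by (cases "fst u = Suc (Suc n)") (auto simp: max_def)
    qed
  qed
qed

definition E' :: "nat \<times> nat \<Rightarrow> nat \<times> nat \<Rightarrow> bool" where
  "E' u v = (u \<noteq> v \<and> (if fst u = fst v then odd (fst u) else even (max (fst u) (fst v))))"

lemma cadj_E':
  assumes "even k" "k \<ge> 1" "u \<in> cverts \<alpha> k" "v \<in> cverts \<alpha> k"
  shows "cadj \<alpha> k u v = E' u v"
proof -
  obtain n where k: "k = Suc n" using assms(2) by (cases k) auto
  have "cadj \<alpha> k u v = (u \<noteq> v \<and> (if fst u = fst v then odd (k - fst u) else even (k - max (fst u) (fst v))))"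
    using cadj_closed[of u v n \<alpha>] assms(3,4) k by (auto simp: cverts_def)
  also have "\<dots> = E' u v"
    using assms by (auto simp: E'_def cverts_def max_def)
  finally show ?thesis .
qed

lemma finite_cverts: "finite (cverts \<alpha> k)"
proof -
  have "cverts \<alpha> k \<subseteq> {1..k} \<times> {..<Max (\<alpha> ` {1..k})}"
  proof
    fix x assume "x \<in> cverts \<alpha> k"
    then obtain i j where x: "x = (i,j)" "1 \<le> i" "i \<le> k" "j < \<alpha> i" by (auto simp: cverts_def)
    have "\<alpha> i \<le> Max (\<alpha> ` {1..k})" using x by (intro Max_ge) auto
    then have "j < Max (\<alpha> ` {1..k})" using x(4) by linarith
    with x show "x \<in> {1..k} \<times> {..<Max (\<alpha> ` {1..k})}" by auto
  qed
  then show ?thesis by (rule finite_subset) auto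
qed

lemma card_evens:
  assumes "i \<le> k div 2"
  shows "card ((\<lambda>l. 2*l) ` {i..k div 2}) = k div 2 - i + 1"
proof -
  have "inj_on (\<lambda>l::nat. 2*l) {i..k div 2}" by (auto simp: inj_on_def)
  then show ?thesis using assms by (simp add: card_image)
qed

lemma upper:
  assumes k: "even k" "k \<ge> 2"
    and S: "is_clique (cverts \<alpha> k) E' S"
  shows "\<exists>i. 1 \<le> i \<and> i \<le> k div 2 \<and> card S \<le> \<alpha> (2 * i - 1) + (k div 2 - i + 1)"
proof -
  have SV: "S \<subseteq> cverts \<alpha> k" and adj: "\<And>u v. u \<in> S \<Longrightarrow> v \<in> S \<Longrightarrow> u \<noteq> v \<Longrightarrow> E' u v"
    using S by (auto simp: is_clique_def)
  have finS: "finite S" using SV finite_cverts finite_subset by blast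
  define Od where "Od = {u\<in>S. odd (fst u)}"
  define Ev where "Ev = {u\<in>S. even (fst u)}"
  have SOE: "S = Od \<union> Ev" "Od \<inter> Ev = {}" by (auto simp: Od_def Ev_def)
  have finO: "finite Od" "finite Ev" using finS by (auto simp: Od_def Ev_def)
  have cardS: "card S = card Od + card Ev" using SOE finO card_Un_disjoint by metis
  have injE: "inj_on fst Ev"
  proof (rule inj_onI)
    fix u v assume "u \<in> Ev" "v \<in> Ev" "fst u = fst v"
    then show "u = v" using adj[of u v] by (auto simp: Ev_def E'_def)
  qed
  have cardEv: "card Ev = card (fst ` Ev)" using injE by (simp add: card_image)
  show ?thesis
  proof (cases "Od = {}")
    case True
    have "fst ` Ev \<subseteq> (\<lambda>l. 2*l) ` {1..k div 2}"
    proof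
      fix j assume "j \<in> fst ` Ev"
      then have "even j" "1 \<le> j" "j \<le> k" using SV by (auto simp: Ev_def cverts_def)
      then show "j \<in> (\<lambda>l. 2*l) ` {1..k div 2}"
        by (intro image_eqI[of _ _ "j div 2"]) auto
    qed
    then have "card (fst ` Ev) \<le> card ((\<lambda>l. 2*l) ` {1..k div 2})"
      by (intro card_mono) auto
    moreover have "card ((\<lambda>l. 2*l) ` {1..k div 2}) = k div 2"
      using card_evens[of 1 k] k by simp
    ultimately have "card (fst ` Ev) \<le> k div 2" by simp
    then have "card S \<le> \<alpha> (2*1-1) + (k div 2 - 1 + 1)" using cardS cardEv True k by simp
    then show ?thesis using k by (intro exI[of _ 1]) auto
  next
    case False
    then obtain w where w: "w \<in> Od" by auto
    define p where "p = fst w"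
    have pw: "odd p" "1 \<le> p" "p \<le> k" using w SV by (auto simp: Od_def p_def cverts_def)
    obtain q where q: "p = 2*q+1" using pw(1) oddE by blast
    define i where "i = q + 1"
    have kk: "k = 2 * (k div 2)" using k by simp
    have i12: "1 \<le> i" "i \<le> k div 2" using pw(3) q kk unfolding i_def by linarith+
    have i3: "p = 2*i - 1" using q unfolding i_def by simp
    note i = i12 i3
    have Osub: "Od \<subseteq> {p} \<times> {..<\<alpha> p}"
    proof
      fix u assume u: "u \<in> Od"
      have "fst u = p"
      proof (rule ccontr)
        assume "fst u \<noteq> p"
        then have "u \<noteq> w" by (auto simp: p_def)
        then have "E' u w" using adj[of u w] u w by (auto simp: Od_def)
        then show False using u pw \<open>fst u \<noteq> p\<close> by (auto simp: E'_def Od_def p_def max_def split: if_splits)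
      qed
      then show "u \<in> {p} \<times> {..<\<alpha> p}" using u SV by (auto simp: Od_def cverts_def mem_Times_iff)
    qed
    have cO: "card Od \<le> \<alpha> p" using card_mono[OF _ Osub] by (simp add: card_cartesian_product)
    have "fst ` Ev \<subseteq> (\<lambda>l. 2*l) ` {i..k div 2}"
    proof
      fix j assume "j \<in> fst ` Ev"
      then obtain u where u: "u \<in> Ev" "j = fst u" by auto
      then have j: "even j" "1 \<le> j" "j \<le> k" using SV by (auto simp: Ev_def cverts_def)
      have "u \<noteq> w" using u w by (auto simp: Ev_def Od_def)
      then have "E' u w" using adj u w by (auto simp: Ev_def Od_def)
      then have "p < j" using j pw u by (auto simp: E'_def p_def max_def split: if_splits)
      then show "j \<in> (\<lambda>l. 2*l) ` {i..k div 2}" using j i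
        by (intro image_eqI[of _ _ "j div 2"]) auto
    qed
    then have "card (fst ` Ev) \<le> card ((\<lambda>l. 2*l) ` {i..k div 2})"
      by (intro card_mono) auto
    then have "card (fst ` Ev) \<le> k div 2 - i + 1"
      using card_evens[of i k] i by simp
    then have "card S \<le> \<alpha> (2*i-1) + (k div 2 - i + 1)" using cardS cardEv cO i by simp
    then show ?thesis using i by auto
  qed
qed

lemma lower:
  assumes k: "even k" "k \<ge> 2" and pos: "\<forall>i. 1 \<le> i \<and> i \<le> k \<longrightarrow> \<alpha> i > 0"
    and i: "1 \<le> i" "i \<le> k div 2"
  shows "\<exists>S. is_clique (cverts \<alpha> k) E' S \<and> card S = \<alpha> (2 * i - 1) + (k div 2 - i + 1)"
proof -
  define A where "A = {2*i-1} \<times> {..<\<alpha> (2*i-1)}"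
  define B where "B = (\<lambda>l. (2*l, 0::nat)) ` {i..k div 2}"
  have oddp: "odd (2*i-1)" using i by presburger
  have neq: "\<forall>l. 2*i-1 \<noteq> 2*l" using oddp by (metis even_mult_iff even_numeral)
  have AB: "A \<inter> B = {}" using neq by (auto simp: A_def B_def)
  have cA: "card A = \<alpha> (2*i-1)" by (simp add: A_def card_cartesian_product)
  have "inj_on (\<lambda>l. (2*l, 0::nat)) {i..k div 2}" by (auto simp: inj_on_def)
  then have cB: "card B = k div 2 - i + 1" using i by (simp add: B_def card_image)
  have "card (A \<union> B) = \<alpha> (2*i-1) + (k div 2 - i + 1)"
    using AB cA cB by (simp add: card_Un_disjoint A_def B_def)
  moreover have "is_clique (cverts \<alpha> k) E' (A \<union> B)"
    unfolding is_clique_def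
  proof
    show "A \<union> B \<subseteq> cverts \<alpha> k"
    proof
      fix x assume "x \<in> A \<union> B"
      then show "x \<in> cverts \<alpha> k"
      proof
        assume "x \<in> A" then show ?thesis using i k by (auto simp: A_def cverts_def)
      next
        assume "x \<in> B"
        then obtain l where l: "x = (2*l,0)" "i \<le> l" "l \<le> k div 2" by (auto simp: B_def)
        then have "\<alpha> (2*l) > 0" using pos i k by auto
        then show ?thesis using l i k by (auto simp: cverts_def)
      qed
    qed
    show "\<forall>u\<in>A \<union> B. \<forall>v\<in>A \<union> B. u \<noteq> v \<longrightarrow> E' u v"
      using i oddp neq by (auto simp: A_def B_def E'_def max_def)
  qed
  ultimately show ?thesis by blast
qed

theorem theorem5p1:
  fixes k :: nat and \<alpha> :: "nat \<Rightarrow> nat"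
  assumes "k \<ge> 2" and "even k"
    and "\<forall>i. 1 \<le> i \<and> i \<le> k \<longrightarrow> \<alpha> i > 0"
  shows "clique_number (cverts \<alpha> k) (cadj \<alpha> k)
           = Max {\<alpha> (2 * i - 1) + (k div 2 - i + 1) | i. 1 \<le> i \<and> i \<le> k div 2}"
proof -
  have eq: "is_clique (cverts \<alpha> k) (cadj \<alpha> k) S = is_clique (cverts \<alpha> k) E' S" for S
    using cadj_E'[of k] assms unfolding is_clique_def by (metis in_mono le_trans one_le_numeral)
  define M where "M = Max {\<alpha> (2 * i - 1) + (k div 2 - i + 1) | i. 1 \<le> i \<and> i \<le> k div 2}"
  have MS: "{\<alpha> (2 * i - 1) + (k div 2 - i + 1) | i. 1 \<le> i \<and> i \<le> k div 2}
      = (\<lambda>i. \<alpha> (2 * i - 1) + (k div 2 - i + 1)) ` {1..k div 2}"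
    apply (rule set_eqI) apply (simp only: mem_Collect_eq image_iff atLeastAtMost_iff Bex_def) by blast
  have finM: "finite {\<alpha> (2 * i - 1) + (k div 2 - i + 1) | i. 1 \<le> i \<and> i \<le> k div 2}"
    unfolding MS by simp
  have neM: "{\<alpha> (2 * i - 1) + (k div 2 - i + 1) | i. 1 \<le> i \<and> i \<le> k div 2} \<noteq> {}"
    using assms by (auto intro!: exI[of _ 1])
  define C where "C = {card S | S. is_clique (cverts \<alpha> k) (cadj \<alpha> k) S}"
  have finC: "finite C"
  proof -
    have "C \<subseteq> card ` Pow (cverts \<alpha> k)" by (auto simp: C_def is_clique_def)
    then show ?thesis using finite_cverts by (meson finite_Pow_iff finite_imageI finite_subset)
  qed
  have "Max C = M"
  proof (rule Max_eqI[OF finC])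
    fix y assume "y \<in> C"
    then obtain S where S: "y = card S" "is_clique (cverts \<alpha> k) E' S" by (auto simp: C_def eq)
    obtain i where "1 \<le> i" "i \<le> k div 2" "card S \<le> \<alpha> (2 * i - 1) + (k div 2 - i + 1)"
      using upper[OF _ _ S(2)] assms by blast
    moreover have "\<alpha> (2 * i - 1) + (k div 2 - i + 1) \<le> M"
      unfolding M_def MS using calculation by (intro Max_ge) auto
    ultimately show "y \<le> M" using S by simp
  next
    have "M \<in> {\<alpha> (2 * i - 1) + (k div 2 - i + 1) | i. 1 \<le> i \<and> i \<le> k div 2}"
      unfolding M_def using finM neM by (rule Max_in)
    then obtain i where i: "1 \<le> i" "i \<le> k div 2" "M = \<alpha> (2 * i - 1) + (k div 2 - i + 1)" by auto
    then obtain S where "is_clique (cverts \<alpha> k) E' S" "card S = M" using lower[OF _ _ _ i(1,2)] assms by metis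
    then show "M \<in> C" by (auto simp: C_def eq)
  qed
  then show ?thesis by (simp add: clique_number_def C_def M_def)
qed

end
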